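(* Let $d\ge2$, $D_d=\bigl(\binom{d-j}{d-i}\bigr)_{1\le i,j\le d}$ (with $\binom{r}{s}=0$ for $s<0$ or $s>r$), and let $j$ be an even integer with $2\le j\le d$. Let $D'_d(j)$ be the $j\times j$ submatrix of $D_d$ formed by its first $j$ columns and by rows $1,\dots,\frac j2$ and $d-\frac j2+1,\dots,d$. Then $\det D'_d(j)=1$, so $D'_d(j)^{-1}\in M_{j\times j}(\mathbb Z)$, and the entry of $D'_d(j)^{-1}$ in row $j$ and column $\frac j2$ equals $\pm1$.
   Context: Standard binomial coefficients, with the convention $\binom{r}{s}=0$ for $s<0$ or $s>r$. *)

theory Defs
  imports "Jordan_Normal_Form.Determinant"
begin

text \<open>Isabelle matrices are 0-indexed: entry (i,k) here is the paper's entry (i+1,k+1).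
  Since 1 <= i,k <= d, both d-k and d-i are nonnegative, and nat choose gives 0
  when d-i > d-k, matching the convention.\<close>
definition D_mat :: "nat \<Rightarrow> int mat" where
  "D_mat d = mat d d (\<lambda>(i,k). int ((d - (k+1)) choose (d - (i+1))))"

text \<open>Row map for D'_d(j): 0-indexed row r < j/2 is paper row r+1; row r >= j/2 is
  paper row d - j + r + 1 (so rows d-j/2+1,...,d). Returned 0-indexed.\<close>
definition D'_row :: "nat \<Rightarrow> nat \<Rightarrow> nat \<Rightarrow> nat" where
  "D'_row d j r = (if r < j div 2 then r else d - j + r)"

definition D'_mat :: "nat \<Rightarrow> nat \<Rightarrow> int mat" where
  "D'_mat d j = mat j j (\<lambda>(r,c). D_mat d $$ (D'_row d j r, c))"

end

theory Submission
  imports Defs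
begin

lemma shift_sum: "r \<le> (m::nat) \<Longrightarrow> (\<Sum>t<m. if r \<le> t then g t else (0::'a::comm_monoid_add)) = (\<Sum>s<m-r. g (r+s))"
proof (induction m)
  case 0 then show ?case by simp
next
  case (Suc m)
  show ?case
  proof (cases "r \<le> m")
    case True
    then have "Suc m - r = Suc (m - r)" by simp
    with True Suc show ?thesis by (simp add: add.commute)
  next
    case False
    then have "r = Suc m" using Suc by simp
    then show ?thesis by simp
  qed
qed

lemma prod_diag_one: assumes "\<And>i. i < dim_row A \<Longrightarrow> A $$ (i,i) = 1"
  shows "prod_list (diag_mat A) = 1"
proof -
  have "diag_mat A = map (\<lambda>i. 1) [0..<dim_row A]"
    unfolding diag_mat_def by (rule map_cong) (auto simp: assms)
  then show ?thesis by (simp add: map_replicate_const)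
qed

lemma key: "det (mat m m (\<lambda>(r,c). int ((N + (m-1-c)) choose (m-1-r)))) = 1"
proof -
  define L where "L = mat m m (\<lambda>(r,t). if r \<le> t then int (N choose (t-r)) else 0)"
  define U where "U = mat m m (\<lambda>(t,c). int ((m-1-c) choose (m-1-t)))"
  have Lc: "L \<in> carrier_mat m m" and Uc: "U \<in> carrier_mat m m" unfolding L_def U_def by auto
  have eq: "mat m m (\<lambda>(r,c). int ((N + (m-1-c)) choose (m-1-r))) = L * U"
  proof (rule eq_matI)
    fix r c assume r: "r < dim_row (L*U)" and c: "c < dim_col (L*U)"
    then have rm: "r < m" and cm: "c < m" unfolding L_def U_def by auto
    have "(L*U) $$ (r,c) = (\<Sum>t<m. if r \<le> t then int ((N choose (t-r)) * ((m-1-c) choose (m-1-t))) else 0)"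
      using rm cm unfolding L_def U_def
      by (auto simp add: scalar_prod_def lessThan_atLeast0 intro!: sum.cong)
    also have "\<dots> = (\<Sum>s<m-r. int ((N choose s) * ((m-1-c) choose (m-1-r-s))))"
      using rm by (subst shift_sum) (auto simp: diff_diff_add)
    also have "{..<m-r} = {..m-1-r}" using rm by auto
    also have "(\<Sum>s\<le>m-1-r. int ((N choose s) * ((m-1-c) choose (m-1-r-s)))) = int ((N + (m-1-c)) choose (m-1-r))"
      by (simp only: of_nat_sum[symmetric] vandermonde)
    finally show "mat m m (\<lambda>(r,c). int ((N + (m-1-c)) choose (m-1-r))) $$ (r,c) = (L*U) $$ (r,c)"
      using rm cm by simp
  qed (auto simp: L_def U_def)
  have dL: "det L = 1"
    by (subst det_upper_triangular[OF _ Lc]) (auto simp: upper_triangular_def L_def intro!: prod_diag_one)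
  have dU: "det U = 1"
    by (subst det_lower_triangular[OF _ Uc]) (auto simp: U_def intro!: prod_diag_one)
  show ?thesis unfolding eq det_mult[OF Lc Uc] dL dU by simp
qed

lemma block_det:
  fixes X :: "int mat"
  assumes X: "X \<in> carrier_mat (k+l) (k+l)"
    and z: "\<And>i c. i < k \<Longrightarrow> c < k+l \<Longrightarrow> i < c \<Longrightarrow> X $$ (i,c) = 0"
    and o: "\<And>i. i < k \<Longrightarrow> X $$ (i,i) = 1"
  shows "det X = det (mat l l (\<lambda>(r,c). X $$ (k+r, k+c)))"
proof -
  define A1 where "A1 = mat k k (\<lambda>(i,c). X $$ (i,c))"
  define A3 where "A3 = mat l k (\<lambda>(i,c). X $$ (k+i,c))"
  define A4 where "A4 = mat l l (\<lambda>(r,c). X $$ (k+r, k+c))"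
  have eq: "X = four_block_mat A1 (0\<^sub>m k l) A3 A4"
    using X by (intro eq_matI) (auto simp: A1_def A3_def A4_def index_mat_four_block z)
  have "det X = det A1 * det A4" unfolding eq
    by (rule det_four_block_mat_upper_right_zero) (auto simp: A1_def A3_def A4_def)
  moreover have "det A1 = 1"
    by (subst det_lower_triangular[of k]) (auto simp: A1_def z o intro!: prod_diag_one)
  ultimately show ?thesis by (simp add: A4_def)
qed

lemma D'_entry: "r < j \<Longrightarrow> c < j \<Longrightarrow> j \<le> d \<Longrightarrow>
  D'_mat d j $$ (r,c) = int ((d - Suc c) choose (d - Suc (D'_row d j r)))"
  unfolding D'_mat_def D_mat_def D'_row_def by auto

theorem corollary5p12:
  fixes d j :: nat
  assumes "d \<ge> 2" and "even j" and "2 \<le> j" and "j \<le> d"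
  shows "det (D'_mat d j) = 1 \<and>
    (\<exists>B \<in> carrier_mat j j.
        D'_mat d j * B = 1\<^sub>m j \<and> B * D'_mat d j = 1\<^sub>m j \<and>
        B $$ (j - 1, j div 2 - 1) \<in> {1, -1})"
proof -
  define m where "m = j div 2"
  define n where "n = d - j"
  have jm: "j = m + m" and m1: "m \<ge> 1" and dn: "d = n + m + m"
    using assms by (auto simp: m_def n_def)
  define X where "X = D'_mat d j"
  have Xc: "X \<in> carrier_mat j j" unfolding X_def D'_mat_def by auto
  have Xe: "\<And>r c. r < j \<Longrightarrow> c < j \<Longrightarrow> X $$ (r,c) =
     int ((d - Suc c) choose (d - Suc (if r < m then r else d - j + r)))"
    unfolding X_def using assms by (subst D'_entry) (auto simp: D'_row_def m_def)
  have detX: "det X = 1"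
  proof -
    have "det X = det (mat m m (\<lambda>(r,c). X $$ (m+r, m+c)))"
      by (rule block_det) (use Xc jm in \<open>auto simp: Xe dn\<close>)
    also have "mat m m (\<lambda>(r,c). X $$ (m+r, m+c)) = mat m m (\<lambda>(r,c). int ((n + (m-1-c)) choose (m-1-r)))"
      by (rule eq_matI) (auto simp: Xe jm dn)
    finally show ?thesis using key by simp
  qed
  define B where "B = adj_mat X"
  have Bc: "B \<in> carrier_mat j j" and XB: "X * B = 1\<^sub>m j" and BX: "B * X = 1\<^sub>m j"
    using adj_mat[OF Xc] detX by (auto simp: B_def)
  define Y where "Y = mat_delete X (m-1) (j-1)"
  have Yc: "Y \<in> carrier_mat ((m-1) + m) ((m-1) + m)" using Xc m1 jm unfolding Y_def by auto
  have Ye: "\<And>r c. r < j - 1 \<Longrightarrow> c < j - 1 \<Longrightarrow> Y $$ (r,c) = X $$ (if r < m - 1 then r else Suc r, c)"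
    unfolding Y_def mat_delete_def using Xc by auto
  have detY: "det Y = 1"
  proof -
    have "det Y = det (mat m m (\<lambda>(r,c). Y $$ (m-1+r, m-1+c)))"
      by (rule block_det) (use Yc jm m1 in \<open>auto simp: Ye Xe dn\<close>)
    also have "mat m m (\<lambda>(r,c). Y $$ (m-1+r, m-1+c)) = mat m m (\<lambda>(r,c). int (((n+1) + (m-1-c)) choose (m-1-r)))"
      by (rule eq_matI) (use m1 in \<open>auto simp: Ye Xe jm dn Suc_diff_Suc\<close>)
    finally show ?thesis using key[of m "n+1"] by simp
  qed
  have "B $$ (j - 1, m - 1) = cofactor X (m-1) (j-1)"
    unfolding B_def adj_mat_def using Xc jm m1 by auto
  also have "\<dots> = (-1)^(m-1+(j-1))" unfolding cofactor_def detY[unfolded Y_def] by simp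
  finally have "B $$ (j - 1, m - 1) \<in> {1, -1}" 
    by (cases "even (m-1+(j-1))") (auto simp: neg_one_even_power neg_one_odd_power)
  then show ?thesis using detX Bc XB BX unfolding X_def m_def by blast
qed

end
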